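(* Let $N\ge3$. For $\alpha>0$ let $$\Lambda_\alpha=\inf_{0\ne u\in H^1_{0,\mathrm{rad}}(B)}\frac{\int_B|Du|^2dx}{\int_B(1-|x|)^\alpha|u|^2dx}.$$ Then there exists $C>0$ such that $\liminf_{\alpha\to\infty}\alpha^{-2}\Lambda_\alpha\ge C$.
   Context: $B=B(0,1)\subset\mathbb R^N$; $H^1_{0,\mathrm{rad}}(B)$ denotes radial functions in $H^1_0(B)$. ($\Lambda_\alpha$ is the radial best constant $S_{\alpha,\mathrm{rad}}$ in the case $R=1$, $p=1$.) *)

theory Defs
  imports "HOL-Analysis.Analysis"
begin

coinductive smooth_fun :: "('a::euclidean_space \<Rightarrow> real) \<Rightarrow> bool" where
  "(\<forall>x. f differentiable (at x)) \<Longrightarrow>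
   (\<forall>i\<in>Basis. smooth_fun (\<lambda>x. frechet_derivative f (at x) i)) \<Longrightarrow> smooth_fun f"

definition grad :: "('a::euclidean_space \<Rightarrow> real) \<Rightarrow> 'a \<Rightarrow> 'a" where
  "grad f x = (\<Sum>i\<in>Basis. frechet_derivative f (at x) i *\<^sub>R i)"

definition test_fun :: "('a::euclidean_space \<Rightarrow> real) \<Rightarrow> bool" where
  "test_fun \<phi> \<longleftrightarrow> smooth_fun \<phi> \<and> closure {x. \<phi> x \<noteq> 0} \<subseteq> ball 0 1"

text \<open>H^1_0(B) as the completion of C_c^infinity(B) in the H^1 norm:
  u belongs to H^1_0(B) with weak gradient G iff some sequence of test functions
  converges to u in L^2 and whose gradients converge to G in L^2.\<close>
definition H10 :: "('a::euclidean_space \<Rightarrow> real) \<Rightarrow> ('a \<Rightarrow> 'a) \<Rightarrow> bool" where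
  "H10 u G \<longleftrightarrow> u \<in> borel_measurable lborel \<and> G \<in> borel_measurable lborel \<and>
     (\<exists>\<phi>. (\<forall>k. test_fun (\<phi> k)) \<and>
        (\<lambda>k. \<integral>\<^sup>+ x. ennreal ((\<phi> k x - u x)\<^sup>2) \<partial>lborel) \<longlonglongrightarrow> 0 \<and>
        (\<lambda>k. \<integral>\<^sup>+ x. ennreal ((norm (grad (\<phi> k) x - G x))\<^sup>2) \<partial>lborel) \<longlonglongrightarrow> 0)"

definition radial :: "('a::euclidean_space \<Rightarrow> real) \<Rightarrow> bool" where
  "radial u \<longleftrightarrow> (\<forall>x y. norm x = norm y \<longrightarrow> u x = u y)"

definition Lambda :: "'a::euclidean_space itself \<Rightarrow> real \<Rightarrow> real" where
  "Lambda TYPE('a) \<alpha> = Inf {(\<integral>x. (norm (G x))\<^sup>2 \<partial>lborel) /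
        (\<integral>x\<in>ball 0 1. (1 - norm x) powr \<alpha> * (u x)\<^sup>2 \<partial>lborel) | (u :: 'a \<Rightarrow> real) G.
        H10 u G \<and> radial u \<and> (\<integral>\<^sup>+ x. ennreal ((u x)\<^sup>2) \<partial>lborel) \<noteq> 0}"

end

theory Submission
  imports Defs "HOL-Computational_Algebra.Polynomial"
begin


definition psi :: "real poly \<Rightarrow> real \<Rightarrow> real" where
  "psi P t = (if t > 0 then poly P (1/t) * exp (-1/t) else 0)"

definition dP :: "real poly \<Rightarrow> real poly" where
  "dP P = monom 1 2 * (P - pderiv P)"

lemma poly_exp_lim: fixes P :: "real poly" shows "((\<lambda>y. poly P y * exp (-y)) \<longlongrightarrow> 0) at_top"
proof -
  have "((\<lambda>y. \<Sum>i\<le>degree P. coeff P i * (y ^ i / exp y)) \<longlongrightarrow> (\<Sum>i\<le>degree P. coeff P i * 0)) at_top"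
    by (intro tendsto_sum tendsto_mult tendsto_const tendsto_power_div_exp_0)
  moreover have "(\<lambda>y. \<Sum>i\<le>degree P. coeff P i * (y ^ i / exp y)) = (\<lambda>y. poly P y * exp (-y))"
    by (auto simp: poly_altdef sum_divide_distrib exp_minus field_simps)
  ultimately show ?thesis by simp
qed

lemma psi_deriv: "(psi P has_real_derivative psi (dP P) t) (at t)"
proof (cases "t > 0")
  case True
  have "((\<lambda>t. poly P (1/t) * exp (-1/t)) has_real_derivative
      poly (pderiv P) (1/t) * (- 1 / t^2) * exp (-1/t) + poly P (1/t) * (exp (-1/t) * (1 / t^2))) (at t)"
    using True
    by (auto intro!: derivative_eq_intros DERIV_chain2[OF poly_DERIV] simp: power2_eq_square field_simps)
  moreover have "poly (pderiv P) (1/t) * (- 1 / t^2) * exp (-1/t) + poly P (1/t) * (exp (-1/t) * (1 / t^2))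
      = psi (dP P) t"
    using True by (simp add: psi_def dP_def poly_monom field_simps power2_eq_square)
  ultimately have d: "((\<lambda>t. poly P (1/t) * exp (-1/t)) has_real_derivative psi (dP P) t) (at t)" by simp
  show ?thesis
    by (rule has_field_derivative_transform_within_open[OF d, of "{0<..}"]) (use True in \<open>auto simp: psi_def\<close>)
next
  case False
  show ?thesis
  proof (cases "t < 0")
    case True
    have d: "((\<lambda>t. 0) has_real_derivative psi (dP P) t) (at t)"
      using True by (simp add: psi_def)
    show ?thesis
      by (rule has_field_derivative_transform_within_open[OF d, of "{..<0}"]) (use True in \<open>auto simp: psi_def\<close>)
  next
    case False
    with \<open>\<not> t > 0\<close> have t0: "t = 0" by simp
    have "((\<lambda>y. (psi P y - psi P 0) / (y - 0)) \<longlongrightarrow> 0) (at 0)"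
    proof (rule filterlim_split_at_real)
      show "((\<lambda>y. (psi P y - psi P 0) / (y - 0)) \<longlongrightarrow> 0) (at_left 0)"
        by (rule Lim_transform_within[where f="\<lambda>_. 0" and d=1]) (auto simp: psi_def)
      have lim: "((\<lambda>x. poly (monom 1 1 * P) (inverse x) * exp (- inverse x)) \<longlongrightarrow> 0) (at_right 0)"
        by (rule filterlim_compose[OF poly_exp_lim filterlim_inverse_at_top_right, of "monom 1 1 * P"])
      show "((\<lambda>y. (psi P y - psi P 0) / (y - 0)) \<longlongrightarrow> 0) (at_right 0)"
        by (rule Lim_transform_within[OF lim, where d=1])
           (auto simp: psi_def poly_monom field_simps)
    qed
    then show ?thesis using t0 by (simp add: has_field_derivative_iff psi_def)
  qed
qed

inductive Sm :: "('a::euclidean_space \<Rightarrow> real) \<Rightarrow> bool" where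
  Sconst: "Sm (\<lambda>x. c)"
| Scoord: "Sm (\<lambda>x. x \<bullet> v)"
| Spsi: "Sm (\<lambda>x. psi P (1/4 - x \<bullet> x))"
| Sadd: "Sm f \<Longrightarrow> Sm g \<Longrightarrow> Sm (\<lambda>x. f x + g x)"
| Smult: "Sm f \<Longrightarrow> Sm g \<Longrightarrow> Sm (\<lambda>x. f x * g x)"

lemma Sm_deriv:
  assumes "Sm f"
  shows "\<exists>f'. (\<forall>x. (f has_derivative f' x) (at x)) \<and> (\<forall>v. Sm (\<lambda>x. f' x v))"
  using assms
proof induction
  case (Sconst c)
  show ?case by (rule exI[of _ "\<lambda>x h. 0"]) (auto intro: Sm.Sconst)
next
  case (Scoord v)
  show ?case
    by (rule exI[of _ "\<lambda>x h. h \<bullet> v"]) (auto intro!: derivative_eq_intros Sm.Sconst)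
next
  case (Spsi P)
  have "((\<lambda>x. psi P (1/4 - x \<bullet> x)) has_derivative (\<lambda>h. psi (dP P) (1/4 - x \<bullet> x) * (- (2 * (x \<bullet> h))))) (at x)"
    for x :: 'a
  proof -
    have a: "((\<lambda>x. 1/4 - x \<bullet> x) has_derivative (\<lambda>h. - (2 * (x \<bullet> h)))) (at x)"
      by (auto intro!: derivative_eq_intros simp: inner_commute)
    have b: "(psi P has_derivative (\<lambda>y. psi (dP P) (1/4 - x \<bullet> x) * y)) (at (1/4 - x \<bullet> x))"
      by (rule has_field_derivative_imp_has_derivative[OF psi_deriv])
    from has_derivative_compose[OF a b] show ?thesis by (simp add: o_def)
  qed
  moreover have "Sm (\<lambda>x::'a. psi (dP P) (1/4 - x \<bullet> x) * (- (2 * (x \<bullet> v))))" for v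
  proof -
    have "Sm (\<lambda>x::'a. psi (dP P) (1/4 - x \<bullet> x) * ((-2) * (x \<bullet> v)))"
      by (intro Sm.Smult Sm.Sconst Sm.Scoord Sm.Spsi)
    then show ?thesis by simp
  qed
  ultimately show ?case
    by (intro exI[of _ "\<lambda>x h. psi (dP P) (1/4 - x \<bullet> x) * (- (2 * (x \<bullet> h)))"]) auto
next
  case (Sadd f g)
  then obtain f' g' where f: "\<forall>x. (f has_derivative f' x) (at x)" "\<forall>v. Sm (\<lambda>x. f' x v)"
    and g: "\<forall>x. (g has_derivative g' x) (at x)" "\<forall>v. Sm (\<lambda>x. g' x v)" by blast
  show ?case
    by (rule exI[of _ "\<lambda>x h. f' x h + g' x h"]) (use f g in \<open>auto intro!: derivative_eq_intros Sm.Sadd\<close>)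
next
  case (Smult f g)
  then obtain f' g' where f: "\<forall>x. (f has_derivative f' x) (at x)" "\<forall>v. Sm (\<lambda>x. f' x v)"
    and g: "\<forall>x. (g has_derivative g' x) (at x)" "\<forall>v. Sm (\<lambda>x. g' x v)" by blast
  show ?case
    by (rule exI[of _ "\<lambda>x h. f x * g' x h + f' x h * g x"])
       (use f g Smult.hyps in \<open>auto intro!: derivative_eq_intros Sm.Sadd Sm.Smult\<close>)
qed

lemma Sm_smooth:
  assumes "Sm f" shows "smooth_fun f"
  using assms
proof (coinduction arbitrary: f)
  case smooth_fun
  then obtain f' where f: "\<forall>x. (f has_derivative f' x) (at x)" "\<forall>v. Sm (\<lambda>x. f' x v)"
    using Sm_deriv by blast
  have "(\<lambda>x. frechet_derivative f (at x) i) = (\<lambda>x. f' x i)" for i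
    using f(1) frechet_derivative_at by metis
  then show ?case using f by (auto simp: differentiable_def)
qed




lemma smooth_diff: "smooth_fun f \<Longrightarrow> f differentiable (at x)"
  by (erule smooth_fun.cases) auto

lemma smooth_partial: "smooth_fun f \<Longrightarrow> i \<in> Basis \<Longrightarrow> smooth_fun (\<lambda>x. frechet_derivative f (at x) i)"
  by (erule smooth_fun.cases) auto

lemma grad_inner:
  assumes "f differentiable (at x)"
  shows "frechet_derivative f (at x) h = grad f x \<bullet> h"
proof -
  have lin: "linear (frechet_derivative f (at x))"
    using assms frechet_derivative_works has_derivative_linear by blast
  have "frechet_derivative f (at x) h = frechet_derivative f (at x) (\<Sum>i\<in>Basis. (h \<bullet> i) *\<^sub>R i)"
    by (simp add: euclidean_representation)
  also have "\<dots> = (\<Sum>i\<in>Basis. (h \<bullet> i) * frechet_derivative f (at x) i)"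
    using lin by (simp add: linear_sum linear_scale)
  also have "\<dots> = grad f x \<bullet> h"
    unfolding grad_def inner_sum_left by (auto intro!: sum.cong simp: inner_commute)
  finally show ?thesis .
qed

lemma test_fun_deriv:
  assumes "test_fun \<phi>"
  shows "(\<phi> has_derivative (\<lambda>h. grad \<phi> x \<bullet> h)) (at x)"
proof -
  have d: "\<phi> differentiable (at x)" using assms smooth_diff by (auto simp: test_fun_def)
  have "(\<lambda>h. grad \<phi> x \<bullet> h) = frechet_derivative \<phi> (at x)"
    using grad_inner[OF d] by auto
  then show ?thesis using d frechet_derivative_works by metis
qed

lemma test_fun_cont: assumes "test_fun \<phi>" shows "continuous_on UNIV \<phi>"
  by (rule continuous_at_imp_continuous_on) (use has_derivative_continuous[OF test_fun_deriv[OF assms]] in auto)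

lemma test_fun_grad_cont:
  assumes "test_fun \<phi>"
  shows "continuous_on UNIV (grad \<phi>)"
proof -
  have "continuous_on UNIV (\<lambda>x. frechet_derivative \<phi> (at x) i)" if "i \<in> Basis" for i
  proof -
    have "smooth_fun (\<lambda>x. frechet_derivative \<phi> (at x) i)"
      using assms that smooth_partial by (auto simp: test_fun_def)
    then have "\<And>x. isCont (\<lambda>x. frechet_derivative \<phi> (at x) i) x"
      using smooth_diff differentiable_imp_continuous_within by blast
    then show ?thesis
      by (simp add: continuous_at_imp_continuous_on)
  qed
  then show ?thesis unfolding grad_def[abs_def]
    by (intro continuous_on_sum continuous_on_scaleR continuous_on_const) auto
qed

lemma test_fun_zero:
  assumes "test_fun \<phi>" "norm x \<ge> 1"
  shows "\<phi> x = 0" "grad \<phi> x = 0"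
proof -
  let ?K = "closure {x. \<phi> x \<noteq> 0}"
  have "?K \<subseteq> ball 0 1" using assms(1) by (simp add: test_fun_def)
  moreover have "x \<notin> ball 0 1" using assms(2) by simp
  ultimately have xK: "x \<notin> ?K" by blast
  have zK: "y \<notin> ?K \<Longrightarrow> \<phi> y = 0" for y
    using closure_subset[of "{x. \<phi> x \<noteq> 0}"] by auto
  show "\<phi> x = 0" by (rule zK[OF xK])
  have o: "open (- ?K)" by auto
  have z: "\<And>y. y \<in> - ?K \<Longrightarrow> (\<lambda>_. 0) y = \<phi> y" using zK by (metis ComplD)
  have "frechet_derivative \<phi> (at x) = frechet_derivative (\<lambda>_. 0) (at x)"
    by (rule frechet_derivative_transform_within_open[OF _ o _ z, symmetric]) (use xK in simp_all)
  also have "\<dots> = (\<lambda>_. 0)"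
    by (rule frechet_derivative_at[symmetric]) simp
  finally show "grad \<phi> x = 0" by (simp add: grad_def)
qed

lemma test_fun_bound:
  assumes "test_fun \<phi>"
  shows "\<exists>M. \<forall>x. \<bar>\<phi> x\<bar> \<le> M \<and> norm (grad \<phi> x) \<le> M"
proof -
  have c: "continuous_on (cball 0 1) (\<lambda>x. \<bar>\<phi> x\<bar> + norm (grad \<phi> x))"
    using continuous_on_subset[OF test_fun_cont[OF assms] subset_UNIV]
      continuous_on_subset[OF test_fun_grad_cont[OF assms] subset_UNIV]
    by (intro continuous_intros)
  have "bounded ((\<lambda>x. \<bar>\<phi> x\<bar> + norm (grad \<phi> x)) ` cball 0 1)"
    by (rule compact_imp_bounded[OF compact_continuous_image[OF c compact_cball]])
  then obtain M where M0: "\<forall>y\<in>(\<lambda>x. \<bar>\<phi> x\<bar> + norm (grad \<phi> x)) ` cball 0 1. norm y \<le> M"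
    unfolding bounded_iff by blast
  have M: "\<And>x. x \<in> cball 0 1 \<Longrightarrow> norm (\<bar>\<phi> x\<bar> + norm (grad \<phi> x)) \<le> M"
    using M0 by blast
  have "\<bar>\<phi> x\<bar> \<le> M \<and> norm (grad \<phi> x) \<le> M" for x
  proof (cases "norm x \<le> 1")
    case True
    then have "\<bar>\<phi> x\<bar> + norm (grad \<phi> x) \<le> M" using M[of x] by simp
    then show ?thesis by (smt (verit) norm_ge_zero)
  next
    case False
    then have "\<phi> x = 0" "grad \<phi> x = 0" using test_fun_zero[OF assms] by auto
    moreover have "0 \<le> M"
    proof -
      have "\<bar>\<phi> 0\<bar> + norm (grad \<phi> 0) \<le> M" using M[of 0] by simp
      moreover have "0 \<le> \<bar>\<phi> 0\<bar> + norm (grad \<phi> 0)" by simp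
      ultimately show ?thesis by linarith
    qed
    ultimately show ?thesis by simp
  qed
  then show ?thesis by blast
qed




definition phi0 :: "'a::euclidean_space \<Rightarrow> real" where
  "phi0 x = psi 1 (1/4 - x \<bullet> x)"

lemma phi0_pos: "norm x < 1/2 \<Longrightarrow> phi0 x > 0"
proof -
  assume "norm x < 1/2"
  then have "norm x ^ 2 < (1/2)^2" by (intro power_strict_mono) auto
  moreover have e: "x \<bullet> x = norm x ^ 2" by (simp add: power2_norm_eq_inner)
  ultimately have "x \<bullet> x < 1/4" by (simp add: power2_eq_square)
  then show ?thesis by (simp add: phi0_def psi_def)
qed

lemma phi0_zero: "norm x \<ge> 1/2 \<Longrightarrow> phi0 x = 0"
proof -
  assume "norm x \<ge> 1/2"
  then have "norm x ^ 2 \<ge> (1/2)^2" by (intro power_mono) auto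
  moreover have e: "x \<bullet> x = norm x ^ 2" by (simp add: power2_norm_eq_inner)
  ultimately have "x \<bullet> x \<ge> 1/4" by (simp add: power2_eq_square)
  then show ?thesis by (simp add: phi0_def psi_def)
qed

lemma phi0_test: "test_fun (phi0 :: 'a::euclidean_space \<Rightarrow> real)"
proof -
  have "Sm (\<lambda>x::'a. psi 1 (1/4 - x \<bullet> x))" by (rule Sm.Spsi)
  then have s: "smooth_fun (phi0 :: 'a \<Rightarrow> real)" unfolding phi0_def[abs_def] by (rule Sm_smooth)
  have "{x::'a. phi0 x \<noteq> 0} \<subseteq> cball 0 (1/2)"
    using phi0_zero by (force simp: mem_cball_0)
  then have "closure {x::'a. phi0 x \<noteq> 0} \<subseteq> cball 0 (1/2)"
    by (rule closure_minimal) simp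
  also have "\<dots> \<subseteq> ball 0 1" by (auto simp: mem_cball_0 mem_ball_0)
  finally show ?thesis using s by (simp add: test_fun_def)
qed

lemma phi0_radial: "radial phi0"
  unfolding radial_def phi0_def by (simp add: power2_norm_eq_inner[symmetric])

lemma phi0_nonzero: "(\<integral>\<^sup>+ x. ennreal ((phi0 x)\<^sup>2) \<partial>lborel) \<noteq> (0::ennreal)"
  (is "?I \<noteq> 0")
proof
  assume I: "?I = 0"
  have m: "(\<lambda>x::'a. ennreal ((phi0 x)\<^sup>2)) \<in> borel_measurable lborel"
  proof -
    have "continuous_on UNIV (\<lambda>x::'a. (phi0 x)\<^sup>2)"
      using test_fun_cont[OF phi0_test] by (intro continuous_on_power)
    then have "(\<lambda>x::'a. (phi0 x)\<^sup>2) \<in> borel_measurable borel"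
      by (rule borel_measurable_continuous_onI)
    then show ?thesis by simp
  qed
  have "AE x in lborel. ennreal ((phi0 (x::'a))\<^sup>2) = 0"
    using nn_integral_0_iff_AE[OF m] I by simp
  then have "AE x in lborel. (x::'a) \<notin> ball 0 (1/2)"
    by (rule eventually_mono) (use phi0_pos in \<open>force simp: mem_ball_0\<close>)
  then have "emeasure lborel (ball (0::'a) (1/2)) = 0"
    by (subst (asm) AE_iff_measurable[of "ball 0 (1/2)"]) auto
  moreover have "emeasure lborel (ball (0::'a) (1/2)) > 0"
    by (simp add: emeasure_ball unit_ball_vol_pos)
  ultimately show False by simp
qed




lemma deriv_seq:
  fixes f :: "real \<Rightarrow> real"
  assumes "(f has_real_derivative D) (at 0)"
  shows "(\<lambda>n. (f (1 / real (Suc n)) - f 0) / (1 / real (Suc n))) \<longlonglongrightarrow> D"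
proof -
  have l: "((\<lambda>y. (f y - f 0) / (y - 0)) \<longlongrightarrow> D) (at 0)"
    using assms by (simp add: has_field_derivative_iff)
  have s: "filterlim (\<lambda>n. 1 / real (Suc n)) (at 0) sequentially"
  proof (rule filterlim_atI)
    show "(\<lambda>n. 1 / real (Suc n)) \<longlonglongrightarrow> 0"
      using LIMSEQ_inverse_real_of_nat by (simp add: inverse_eq_divide)
  qed auto
  show ?thesis using filterlim_compose[OF l s] by simp
qed

lemma scale_integral:
  fixes F :: "'a::euclidean_space \<Rightarrow> real"
  assumes m: "F \<in> borel_measurable borel" and t: "t > 0"
  shows "(\<integral>x. F x \<partial>lborel) = t ^ DIM('a) * (\<integral>x. F (t *\<^sub>R x) \<partial>lborel)"
proof -
  have "(\<integral>x. F x \<partial>lborel) = (\<integral>x. F x \<partial>(density (distr lborel borel (\<lambda>x. 0 + t *\<^sub>R x)) (\<lambda>_. \<bar>t\<bar>^DIM('a))))"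
    using lborel_affine[of t 0] t by (metis less_irrefl)
  also have "\<dots> = (\<integral>x. \<bar>t\<bar>^DIM('a) * F x \<partial>(distr lborel borel (\<lambda>x. 0 + t *\<^sub>R x)))"
    using m by (subst integral_density) auto
  also have "\<dots> = (\<integral>x. \<bar>t\<bar>^DIM('a) * F (0 + t *\<^sub>R x) \<partial>lborel)"
    using m by (subst integral_distr) auto
  finally show ?thesis using t by simp
qed

lemma scaling_identity:
  fixes F :: "'a::euclidean_space \<Rightarrow> real"
  assumes deriv: "\<And>x. (F has_derivative F' x) (at x)"
    and bnd: "\<And>x h. \<bar>F' x h\<bar> \<le> L * norm h"
    and supp: "\<And>x. norm x \<ge> 1 \<Longrightarrow> F x = 0"
    and meas: "(\<lambda>x. F' x x) \<in> borel_measurable lborel"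
  shows "integrable lborel F \<and> integrable lborel (\<lambda>x. F' x x) \<and>
         (\<integral>x. F' x x \<partial>lborel) = - real DIM('a) * (\<integral>x. F x \<partial>lborel)"
proof -
  obtain e :: 'a where e: "e \<in> Basis" using nonempty_Basis by blast
  then have ne: "norm e = 1" by simp
  have "\<bar>F' undefined e\<bar> \<le> L" using bnd[of undefined e] ne by simp
  then have L0: "0 \<le> L" using abs_ge_zero[of "F' undefined e"] by linarith
  have lip: "\<bar>F x - F y\<bar> \<le> L * norm (x - y)" for x y
  proof -
    have "norm (F x - F y) \<le> L * norm (x - y)"
    proof (rule differentiable_bound[of UNIV])
      show "(F has_derivative F' z) (at z within UNIV)" for z using deriv[of z] by simp
      show "onorm (F' z) \<le> L" for z by (rule onorm_le) (use bnd in simp)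
    qed auto
    then show ?thesis by simp
  qed
  have contF: "continuous_on UNIV F"
    using deriv has_derivative_continuous continuous_at_imp_continuous_on by blast
  then have mF[measurable]: "F \<in> borel_measurable borel" by (rule borel_measurable_continuous_onI)
  have Fb: "\<bar>F x\<bar> \<le> indicator (ball 0 1) x *\<^sub>R (2 * L)" for x
  proof (cases "norm x < 1")
    case True
    have "norm (x + 2 *\<^sub>R e) \<ge> 1"
      using norm_triangle_ineq2[of "2 *\<^sub>R e" "- x"] True ne by (simp add: algebra_simps)
    then have "F (x + 2 *\<^sub>R e) = 0" by (rule supp)
    then have "\<bar>F x\<bar> \<le> L * norm (x - (x + 2 *\<^sub>R e))" using lip[of x "x + 2 *\<^sub>R e"] by simp
    then show ?thesis using True ne by (simp add: mem_ball_0)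
  next
    case False
    then show ?thesis using supp[of x] L0 by (simp add: mem_ball_0)
  qed
  have Fb2: "\<bar>F x\<bar> \<le> 2 * L" for x
    using Fb[of x] L0 by (cases "x \<in> ball 0 1") simp_all
  have intInd: "integrable lborel (\<lambda>x::'a. indicator (ball 0 1) x *\<^sub>R c)" for c :: real
    by (rule integrable_indicator) (use emeasure_lborel_ball_finite in \<open>auto simp: top_ennreal_def\<close>)
  have intF: "integrable lborel F"
    by (rule Bochner_Integration.integrable_bound[OF intInd[of "2*L"]]) (use Fb L0 in \<open>auto simp: indicator_def\<close>)
  define h :: "nat \<Rightarrow> real" where "h n = 1 / real (Suc n)" for n
  have h0: "h n > 0" "h n \<le> 1" for n by (auto simp: h_def)
  define s where "s n x = (F ((1 + h n) *\<^sub>R x) - F x) / h n" for n x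
  have ms[measurable]: "s n \<in> borel_measurable lborel" for n
    unfolding s_def[abs_def] by measurable
  have lim: "(\<lambda>n. s n x) \<longlonglongrightarrow> F' x x" for x
  proof -
    have lin: "linear (F' x)" using deriv[of x] has_derivative_linear by blast
    have g: "((\<lambda>y. x + y *\<^sub>R x) has_derivative (\<lambda>y. y *\<^sub>R x)) (at (0::real))"
      by (auto intro!: derivative_eq_intros)
    have d: "(F has_derivative F' x) (at ((\<lambda>y. x + y *\<^sub>R x) 0))" using deriv[of x] by simp
    have "((\<lambda>y. F (x + y *\<^sub>R x)) has_derivative (\<lambda>y. F' x (y *\<^sub>R x))) (at 0)"
      using has_derivative_compose[OF g d] by (simp add: o_def)
    moreover have "(\<lambda>y. F' x (y *\<^sub>R x)) = (*) (F' x x)"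
      by (rule ext) (simp add: linear_scale[OF lin] mult.commute)
    ultimately have "((\<lambda>y. F (x + y *\<^sub>R x)) has_real_derivative F' x x) (at 0)"
      unfolding has_field_derivative_def by simp
    from deriv_seq[OF this] show ?thesis
      by (simp add: s_def h_def algebra_simps)
  qed
  have sb: "norm (s n x) \<le> indicator (ball 0 1) x *\<^sub>R L" for n x
  proof (cases "norm x < 1")
    case True
    have "\<bar>F ((1 + h n) *\<^sub>R x) - F x\<bar> \<le> L * norm ((1 + h n) *\<^sub>R x - x)" by (rule lip)
    also have "\<dots> = L * (h n * norm x)" using h0[of n] by (simp add: algebra_simps)
    also have "\<dots> \<le> L * h n" using True h0[of n] L0 by (intro mult_left_mono) auto
    finally show ?thesis using True h0[of n] by (simp add: s_def mem_ball_0 abs_div field_simps)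
  next
    case False
    have "norm ((1 + h n) *\<^sub>R x) \<ge> 1"
      using False h0[of n] by (simp add: abs_if) (smt (verit, ccfv_SIG) mult_le_cancel_right1 norm_ge_zero)
    then show ?thesis using False supp[of x] supp[of "(1 + h n) *\<^sub>R x"] L0
      by (simp add: s_def mem_ball_0)
  qed
  have conv: "(\<lambda>n. integral\<^sup>L lborel (s n)) \<longlonglongrightarrow> (\<integral>x. F' x x \<partial>lborel)"
    and intF': "integrable lborel (\<lambda>x. F' x x)"
  proof -
    have a: "AE x in lborel. (\<lambda>n. s n x) \<longlonglongrightarrow> F' x x" using lim by simp
    have b: "\<And>n. AE x in lborel. norm (s n x) \<le> indicator (ball 0 1) x *\<^sub>R L" using sb by simp
    show "(\<lambda>n. integral\<^sup>L lborel (s n)) \<longlonglongrightarrow> (\<integral>x. F' x x \<partial>lborel)"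
      by (rule integral_dominated_convergence[where s=s, OF meas ms intInd a b])
    show "integrable lborel (\<lambda>x. F' x x)"
      by (rule integrable_dominated_convergence[where s=s, OF meas ms intInd a b])
  qed
  have intFt: "integrable lborel (\<lambda>x. F ((1 + h n) *\<^sub>R x))" for n
  proof (rule Bochner_Integration.integrable_bound[OF intInd[of "2*L"]])
    show "(\<lambda>x. F ((1 + h n) *\<^sub>R x)) \<in> borel_measurable lborel" by measurable
    show "AE x in lborel. norm (F ((1 + h n) *\<^sub>R x)) \<le> norm (indicator (ball 0 1) x *\<^sub>R (2 * L))"
    proof (rule AE_I2)
      fix x :: 'a
      show "norm (F ((1 + h n) *\<^sub>R x)) \<le> norm (indicator (ball 0 1) x *\<^sub>R (2 * L))"
      proof (cases "norm x < 1")
        case True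
        have "\<bar>F ((1 + h n) *\<^sub>R x)\<bar> \<le> 2 * L"
          using Fb2 by simp
        then show ?thesis using True L0 by (simp add: indicator_def mem_ball_0)
      next
        case False
        have "norm ((1 + h n) *\<^sub>R x) \<ge> 1"
          using False h0[of n] by (simp add: abs_if) (smt (verit, ccfv_SIG) mult_le_cancel_right1 norm_ge_zero)
        then show ?thesis using supp by simp
      qed
    qed
  qed
  have eq: "integral\<^sup>L lborel (s n) = ((1 / (1 + h n) ^ DIM('a) - 1) / h n) * (\<integral>x. F x \<partial>lborel)" for n
  proof -
    have "integral\<^sup>L lborel (s n) = ((\<integral>x. F ((1 + h n) *\<^sub>R x) \<partial>lborel) - (\<integral>x. F x \<partial>lborel)) / h n"
      unfolding s_def using intFt intF by simp
    also have "(\<integral>x. F ((1 + h n) *\<^sub>R x) \<partial>lborel) = (\<integral>x. F x \<partial>lborel) / (1 + h n) ^ DIM('a)"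
      using scale_integral[OF mF, of "1 + h n"] h0[of n] by (simp add: field_simps)
    finally show ?thesis by (simp add: field_simps)
  qed
  have dq: "(\<lambda>n. (1 / (1 + h n) ^ DIM('a) - 1) / h n) \<longlonglongrightarrow> - real DIM('a)"
  proof -
    have "((\<lambda>y. 1 / (1 + y) ^ DIM('a)) has_real_derivative - real DIM('a)) (at 0)"
      by (auto intro!: derivative_eq_intros)
    from deriv_seq[OF this] show ?thesis by (simp add: h_def)
  qed
  have "(\<lambda>n. integral\<^sup>L lborel (s n)) \<longlonglongrightarrow> - real DIM('a) * (\<integral>x. F x \<partial>lborel)"
    unfolding eq by (intro tendsto_mult dq tendsto_const)
  with conv have "(\<integral>x. F' x x \<partial>lborel) = - real DIM('a) * (\<integral>x. F x \<partial>lborel)"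
    using LIMSEQ_unique by blast
  then show ?thesis using intF intF' by blast
qed




lemma intInd: "integrable lborel (\<lambda>x::'a::euclidean_space. indicator (ball 0 1) x *\<^sub>R c)"
  by (rule integrable_indicator) (use emeasure_lborel_ball_finite in \<open>auto simp: top_ennreal_def\<close>)

lemma integrable_ball_bounded:
  fixes f :: "'a::euclidean_space \<Rightarrow> real"
  assumes "f \<in> borel_measurable lborel" "\<And>x. norm x \<ge> 1 \<Longrightarrow> f x = 0" "\<And>x. \<bar>f x\<bar> \<le> M"
  shows "integrable lborel f"
proof (rule Bochner_Integration.integrable_bound[OF intInd[of M]])
  show "f \<in> borel_measurable lborel" by fact
  show "AE x in lborel. norm (f x) \<le> norm (indicator (ball 0 1) x *\<^sub>R M)"
  proof (rule AE_I2)
    fix x :: 'a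
    show "norm (f x) \<le> norm (indicator (ball 0 1) x *\<^sub>R M)"
      using assms(2,3)[of x] by (cases "norm x < 1") (auto simp: mem_ball_0)
  qed
qed

lemma cont_meas: "continuous_on UNIV f \<Longrightarrow> f \<in> borel_measurable lborel"
  using borel_measurable_continuous_onI by simp

lemma hardy_pointwise:
  fixes G x :: "'a::euclidean_space" and a d :: real
  assumes d: "d = x \<bullet> x + \<delta>^2" "\<delta> > 0" and N: "real DIM('a) \<ge> 3"
  shows "a^2 / (4 * d) \<le> (norm G)^2 + (a * (G \<bullet> x) / d - a^2 * (x \<bullet> x) / d^2) + real DIM('a) * (a^2 * (1 / (2 * d)))"
proof -
  have dpos: "d > 0" using d by (simp add: add_nonneg_pos)
  have r: "x \<bullet> x \<le> d" using d by simp
  have v: "0 \<le> ((2 * d) *\<^sub>R G + a *\<^sub>R x) \<bullet> ((2 * d) *\<^sub>R G + a *\<^sub>R x)" by (rule inner_ge_zero)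
  have nG: "norm G * norm G = G \<bullet> G" by (metis power2_norm_eq_inner power2_eq_square)
  from v have v': "0 \<le> 4 * d^2 * (norm G)^2 + 4 * a * d * (G \<bullet> x) + a^2 * (x \<bullet> x)"
    by (simp add: inner_add_left inner_add_right nG inner_commute algebra_simps power2_eq_square)
  have "(2 * real DIM('a) - 1) * d \<ge> 5 * (x \<bullet> x)"
  proof -
    have "(2 * real DIM('a) - 1) * d \<ge> 5 * d" using N dpos by (intro mult_right_mono) auto
    then show ?thesis using r by linarith
  qed
  then have w: "0 \<le> a^2 * ((2 * real DIM('a) - 1) * d - 5 * (x \<bullet> x))" by simp
  have key: "a^2 * d \<le> 4 * d^2 * (norm G)^2 + 4 * a * (G \<bullet> x) * d - 4 * a^2 * (x \<bullet> x) + 2 * real DIM('a) * a^2 * d"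
    using v' w by (simp add: algebra_simps)
  have "a^2 / (4 * d) = (a^2 * d) / (4 * d^2)" using dpos by (simp add: power2_eq_square field_simps)
  also have "\<dots> \<le> (4 * d^2 * (norm G)^2 + 4 * a * (G \<bullet> x) * d - 4 * a^2 * (x \<bullet> x) + 2 * real DIM('a) * a^2 * d) / (4 * d^2)"
    using key dpos by (intro divide_right_mono) auto
  also have "\<dots> = (norm G)^2 + (a * (G \<bullet> x) / d - a^2 * (x \<bullet> x) / d^2) + real DIM('a) * (a^2 * (1 / (2 * d)))"
    using dpos by (simp add: power2_eq_square field_simps)
  finally show ?thesis .
qed

lemma hardy_test:
  fixes \<phi> :: "'a::euclidean_space \<Rightarrow> real"
  assumes tf: "test_fun \<phi>" and dl: "\<delta> > 0" and N: "DIM('a) \<ge> 3"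
  shows "integrable lborel (\<lambda>x. (\<phi> x)^2 / (4 * (x \<bullet> x + \<delta>^2)))"
    and "integrable lborel (\<lambda>x. (norm (grad \<phi> x))^2)"
    and "(\<integral>x. (\<phi> x)^2 / (4 * (x \<bullet> x + \<delta>^2)) \<partial>lborel) \<le> (\<integral>x. (norm (grad \<phi> x))^2 \<partial>lborel)"
proof -
  define g where "g = grad \<phi>"
  define d where "d x = x \<bullet> x + \<delta>^2" for x :: 'a
  have dpos: "d x > 0" "d x \<ge> \<delta>^2" for x using dl by (auto simp: d_def add_nonneg_pos)
  have dne: "d x \<noteq> 0" for x using dpos(1)[of x] by simp
  obtain M where M: "\<And>x. \<bar>\<phi> x\<bar> \<le> M \<and> norm (g x) \<le> M" using test_fun_bound[OF tf] g_def by blast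
  have M0: "0 \<le> M" using M[of 0] by (meson abs_ge_zero order_trans)
  have z: "\<phi> x = 0" "g x = 0" if "norm x \<ge> 1" for x using test_fun_zero[OF tf that] g_def by auto
  have cphi: "continuous_on UNIV \<phi>" by (rule test_fun_cont[OF tf])
  have cg: "continuous_on UNIV g" unfolding g_def by (rule test_fun_grad_cont[OF tf])
  have cd: "continuous_on UNIV d" unfolding d_def[abs_def] by (intro continuous_intros)
  define F where "F x = (\<phi> x)^2 / (2 * d x)" for x
  define F' where "F' x h = \<phi> x * (g x \<bullet> h) / d x - (\<phi> x)^2 * (x \<bullet> h) / (d x)^2" for x h
  have deriv: "(F has_derivative F' x) (at x)" for x
  proof -
    have dphi: "(\<phi> has_derivative (\<lambda>h. g x \<bullet> h)) (at x)" using test_fun_deriv[OF tf] g_def by simp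
    have dd: "(d has_derivative (\<lambda>h. 2 * (x \<bullet> h))) (at x)"
      unfolding d_def[abs_def] by (auto intro!: derivative_eq_intros simp: inner_commute)
    show ?thesis
      unfolding F_def[abs_def] using dpos(1)[of x]
      by (auto intro!: derivative_eq_intros dphi dd ext simp: F'_def field_simps power2_eq_square)
  qed
  define L where "L = M * M / \<delta>^2 + M * M / (\<delta>^2)^2"
  have bnd: "\<bar>F' x h\<bar> \<le> L * norm h" for x h
  proof (cases "norm x < 1")
    case False
    then show ?thesis using z[of x] M0 dl by (simp add: F'_def L_def)
  next
    case True
    have a1: "\<bar>\<phi> x * (g x \<bullet> h) / d x\<bar> \<le> M * M / \<delta>^2 * norm h"
    proof -
      have "\<bar>\<phi> x * (g x \<bullet> h)\<bar> \<le> M * (M * norm h)"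
      proof -
        have "norm (g x) * norm h \<le> M * norm h" using M[of x] by (intro mult_right_mono) auto
        then have gh: "\<bar>g x \<bullet> h\<bar> \<le> M * norm h" using Cauchy_Schwarz_ineq2[of "g x" h] by linarith
        show ?thesis unfolding abs_mult using M[of x] gh M0 by (intro mult_mono) auto
      qed
      moreover have "\<bar>\<phi> x * (g x \<bullet> h) / d x\<bar> = \<bar>\<phi> x * (g x \<bullet> h)\<bar> / d x" using dpos(1)[of x] by simp
      ultimately have "\<bar>\<phi> x * (g x \<bullet> h) / d x\<bar> \<le> M * (M * norm h) / d x"
        using dpos(1)[of x] by (simp add: divide_right_mono)
      also have "\<dots> \<le> M * (M * norm h) / \<delta>^2"
        using dpos[of x] M0 dl by (intro divide_left_mono) auto
      finally show ?thesis by simp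
    qed
    have a2: "\<bar>(\<phi> x)^2 * (x \<bullet> h) / (d x)^2\<bar> \<le> M * M / (\<delta>^2)^2 * norm h"
    proof -
      have xh: "\<bar>x \<bullet> h\<bar> \<le> norm h"
      proof -
        have "norm x * norm h \<le> 1 * norm h" using True by (intro mult_right_mono) auto
        then show ?thesis using Cauchy_Schwarz_ineq2[of x h] by linarith
      qed
      have p2: "(\<phi> x)^2 \<le> M * M"
      proof -
        have "\<bar>\<phi> x\<bar> * \<bar>\<phi> x\<bar> \<le> M * M" using M[of x] by (intro mult_mono) auto
        then show ?thesis by (simp add: power2_eq_square abs_mult_self_eq)
      qed
      have "\<bar>(\<phi> x)^2 * (x \<bullet> h)\<bar> \<le> M * M * norm h"
        unfolding abs_mult using p2 xh by (intro mult_mono) auto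
      moreover have "\<bar>(\<phi> x)^2 * (x \<bullet> h) / (d x)^2\<bar> = \<bar>(\<phi> x)^2 * (x \<bullet> h)\<bar> / (d x)^2" using dpos(1)[of x] by simp
      ultimately have "\<bar>(\<phi> x)^2 * (x \<bullet> h) / (d x)^2\<bar> \<le> M * M * norm h / (d x)^2"
        using dpos(1)[of x] by (simp add: divide_right_mono)
      also have "\<dots> \<le> M * M * norm h / (\<delta>^2)^2"
        using dpos[of x] M0 dl by (intro divide_left_mono power_mono) auto
      finally show ?thesis by simp
    qed
    have "\<bar>F' x h\<bar> \<le> \<bar>\<phi> x * (g x \<bullet> h) / d x\<bar> + \<bar>(\<phi> x)^2 * (x \<bullet> h) / (d x)^2\<bar>"
      unfolding F'_def by (rule abs_triangle_ineq4)
    also have "\<dots> \<le> M * M / \<delta>^2 * norm h + M * M / (\<delta>^2)^2 * norm h" using a1 a2 by linarith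
    also have "\<dots> = L * norm h" by (simp add: L_def algebra_simps)
    finally show ?thesis .
  qed
  have supp: "F x = 0" if "norm x \<ge> 1" for x using z[OF that] by (simp add: F_def)
  have cF': "continuous_on UNIV (\<lambda>x. F' x x)"
    unfolding F'_def using cphi cg cd by (intro continuous_intros) (auto simp: dne)
  have meas: "(\<lambda>x. F' x x) \<in> borel_measurable lborel" by (rule cont_meas[OF cF'])
  note SI = scaling_identity[OF deriv bnd supp meas]
  have cF: "continuous_on UNIV F"
    unfolding F_def[abs_def] using cphi cd by (intro continuous_intros) (auto simp: dne)
  have gb: "\<bar>(norm (g x))^2\<bar> \<le> M * M" for x
  proof -
    have "norm (g x) * norm (g x) \<le> M * M" using M[of x] by (intro mult_mono) auto
    then show ?thesis by (simp add: power2_eq_square)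
  qed
  have pb: "\<bar>(\<phi> x)^2 / (4 * d x)\<bar> \<le> M * M / (4 * \<delta>^2)" for x
  proof -
    have p2: "(\<phi> x)^2 \<le> M * M"
    proof -
      have "\<bar>\<phi> x\<bar> * \<bar>\<phi> x\<bar> \<le> M * M" using M[of x] by (intro mult_mono) auto
      then show ?thesis by (simp add: power2_eq_square abs_mult_self_eq)
    qed
    have "(\<phi> x)^2 / (4 * d x) \<le> M * M / (4 * d x)" using p2 dpos(1)[of x] by (simp add: divide_right_mono)
    also have "\<dots> \<le> M * M / (4 * \<delta>^2)" using dpos[of x] M0 dl by (intro divide_left_mono) auto
    finally show ?thesis using dpos(1)[of x] by simp
  qed
  have ig: "integrable lborel (\<lambda>x. (norm (g x))^2)"
    by (rule integrable_ball_bounded[OF cont_meas _ gb]) (use cg z in \<open>auto intro!: continuous_intros\<close>)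
  have ip: "integrable lborel (\<lambda>x. (\<phi> x)^2 / (4 * d x))"
    by (rule integrable_ball_bounded[OF cont_meas _ pb]) (use cphi cd z in \<open>auto intro!: continuous_intros simp: dne\<close>)
  show "integrable lborel (\<lambda>x. (\<phi> x)^2 / (4 * (x \<bullet> x + \<delta>^2)))" using ip by (simp add: d_def)
  show "integrable lborel (\<lambda>x. (norm (grad \<phi> x))^2)" using ig by (simp add: g_def)
  have pw: "(\<phi> x)^2 / (4 * d x) \<le> (norm (g x))^2 + F' x x + real DIM('a) * F x" for x
    using hardy_pointwise[where d="d x" and x=x and \<delta>=\<delta> and G="g x" and a="\<phi> x"] dl N unfolding F'_def F_def d_def by simp
  have "(\<integral>x. (\<phi> x)^2 / (4 * d x) \<partial>lborel) \<le> (\<integral>x. (norm (g x))^2 + F' x x + real DIM('a) * F x \<partial>lborel)"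
    using ip ig SI pw by (intro integral_mono) auto
  also have "\<dots> = (\<integral>x. (norm (g x))^2 \<partial>lborel) + (\<integral>x. F' x x \<partial>lborel) + real DIM('a) * (\<integral>x. F x \<partial>lborel)"
    using ig SI by simp
  also have "\<dots> = (\<integral>x. (norm (g x))^2 \<partial>lborel)" using SI by simp
  finally show "(\<integral>x. (\<phi> x)^2 / (4 * (x \<bullet> x + \<delta>^2)) \<partial>lborel) \<le> (\<integral>x. (norm (grad \<phi> x))^2 \<partial>lborel)"
    by (simp add: d_def g_def)
qed




lemma enn_aux: "0 \<le> b \<Longrightarrow> 0 \<le> c \<Longrightarrow> 0 \<le> d \<Longrightarrow> a \<le> 2*b + c*d \<Longrightarrow> ennreal a \<le> 2 * ennreal b + ennreal c * ennreal d"
proof -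
  assume a: "0 \<le> b" "0 \<le> c" "0 \<le> d" "a \<le> 2*b + c*d"
  have "ennreal a \<le> ennreal (2*b + c*d)" using a(4) by (rule ennreal_leI)
  also have "\<dots> = 2 * ennreal b + ennreal c * ennreal d"
    using a by (simp add: ennreal_plus ennreal_mult)
  finally show ?thesis .
qed

lemma sq_split: "(a::real)^2 \<le> 2 * b^2 + 2 * (a - b)^2"
proof -
  have "0 \<le> (b - (a - b))^2" by simp
  then show ?thesis by (simp add: power2_eq_square algebra_simps)
qed

lemma norm_sq_split: "(norm (a::'a::real_normed_vector))^2 \<le> 2 * (norm b)^2 + 2 * (norm (a - b))^2"
proof -
  have "norm a \<le> norm b + norm (a - b)" using norm_triangle_ineq[of b "a - b"] by simp
  then have "(norm a)^2 \<le> (norm b + norm (a - b))^2" by (intro power_mono) auto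
  also have "\<dots> \<le> 2 * (norm b)^2 + 2 * (norm (a - b))^2"
    using sq_split[of "norm b + norm (a - b)" "norm b"] sq_split[of "norm b" "norm (a-b)"]
    by (simp add: power2_eq_square algebra_simps)
  finally show ?thesis .
qed

lemma weight_bound:
  fixes \<alpha> \<rho> :: real
  assumes "\<alpha> \<ge> 1" "0 \<le> \<rho>" "\<rho> < 1"
  shows "(1 - \<rho>) powr \<alpha> \<le> 8 / \<alpha>^2 * (1 / (4 * (\<rho>^2 + (1/\<alpha>)^2)))"
proof -
  have "(1 - \<rho>) powr \<alpha> \<le> exp (-\<rho>) powr \<alpha>"
    using assms by (intro powr_mono2) (auto simp: exp_ge_add_one_self[of "-\<rho>", simplified])
  also have "\<dots> = exp (- (\<alpha> * \<rho>))" by (simp add: powr_def)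
  also have "\<dots> \<le> 2 / (1 + (\<alpha> * \<rho>)^2)"
  proof -
    have y: "0 \<le> \<alpha> * \<rho>" using assms by simp
    have "1 + (\<alpha> * \<rho>)^2 \<le> 2 * exp (\<alpha> * \<rho>)"
      using exp_lower_Taylor_quadratic[OF y] y by linarith
    then show ?thesis by (simp add: exp_minus field_simps add_pos_nonneg)
  qed
  also have "\<dots> = 8 / \<alpha>^2 * (1 / (4 * (\<rho>^2 + (1/\<alpha>)^2)))"
  proof -
    have e: "\<alpha>^2 * (4 * (\<rho>^2 + (1/\<alpha>)^2)) = 4 * (1 + (\<alpha>*\<rho>)^2)"
      using assms by (simp add: field_simps power2_eq_square)
    have "8 / \<alpha>^2 * (1 / (4 * (\<rho>^2 + (1/\<alpha>)^2))) = 8 / (\<alpha>^2 * (4 * (\<rho>^2 + (1/\<alpha>)^2)))"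
      by simp
    also have "\<dots> = 2 / (1 + (\<alpha> * \<rho>)^2)" unfolding e
    proof -
      have "(0::real) < 1 + (\<alpha> * \<rho>)^2" by (simp add: add_pos_nonneg)
      then show "8 / (4 * (1 + (\<alpha> * \<rho>)\<^sup>2)) = 2 / (1 + (\<alpha> * \<rho>)\<^sup>2)"
        by (simp add: divide_simps)
    qed
    finally show ?thesis by simp
  qed
  finally show ?thesis .
qed




lemma nn_split:
  fixes a b d :: "'a \<Rightarrow> real"
  assumes mb: "b \<in> borel_measurable M" and md: "d \<in> borel_measurable M"
    and pos: "\<And>x. 0 \<le> b x" "\<And>x. 0 \<le> d x" "0 \<le> c"
    and le: "\<And>x. a x \<le> 2 * b x + c * d x"
  shows "(\<integral>\<^sup>+x. ennreal (a x) \<partial>M) \<le> 2 * (\<integral>\<^sup>+x. ennreal (b x) \<partial>M) + ennreal c * (\<integral>\<^sup>+x. ennreal (d x) \<partial>M)"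
proof -
  have "(\<integral>\<^sup>+x. ennreal (a x) \<partial>M) \<le> (\<integral>\<^sup>+x. 2 * ennreal (b x) + ennreal c * ennreal (d x) \<partial>M)"
    by (intro nn_integral_mono enn_aux pos le)
  also have "\<dots> = (\<integral>\<^sup>+x. 2 * ennreal (b x) \<partial>M) + (\<integral>\<^sup>+x. ennreal c * ennreal (d x) \<partial>M)"
    using mb md by (intro nn_integral_add) auto
  also have "\<dots> = 2 * (\<integral>\<^sup>+x. ennreal (b x) \<partial>M) + ennreal c * (\<integral>\<^sup>+x. ennreal (d x) \<partial>M)"
    using mb md by (simp add: nn_integral_cmult)
  finally show ?thesis .
qed

lemma test_sq_int:
  assumes tf: "test_fun (\<phi> :: 'a::euclidean_space \<Rightarrow> real)"
  shows "integrable lborel (\<lambda>x. (\<phi> x)^2)"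
proof -
  obtain M where M: "\<And>x. \<bar>\<phi> x\<bar> \<le> M \<and> norm (grad \<phi> x) \<le> M" using test_fun_bound[OF tf] by blast
  have b: "\<bar>(\<phi> x)^2\<bar> \<le> M * M" for x
  proof -
    have "\<bar>\<phi> x\<bar> * \<bar>\<phi> x\<bar> \<le> M * M" using M[of x] by (intro mult_mono) auto
    then show ?thesis by (simp add: power2_eq_square abs_mult_self_eq)
  qed
  show ?thesis
    by (rule integrable_ball_bounded[OF cont_meas _ b])
       (use test_fun_cont[OF tf] test_fun_zero[OF tf] in \<open>auto intro!: continuous_intros\<close>)
qed

lemma enn_finite_int:
  fixes f :: "'a \<Rightarrow> real"
  assumes "f \<in> borel_measurable M" "\<And>x. 0 \<le> f x" "(\<integral>\<^sup>+x. ennreal (f x) \<partial>M) < \<infinity>"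
  shows "integrable M f" "(\<integral>\<^sup>+x. ennreal (f x) \<partial>M) = ennreal (\<integral>x. f x \<partial>M)"
proof -
  show i: "integrable M f" using assms by (simp add: integrable_iff_bounded)
  show "(\<integral>\<^sup>+x. ennreal (f x) \<partial>M) = ennreal (\<integral>x. f x \<partial>M)"
    by (rule nn_integral_eq_integral[OF i]) (use assms in auto)
qed




lemma main_ineq:
  fixes u :: "'a::euclidean_space \<Rightarrow> real" and G :: "'a \<Rightarrow> 'a"
  assumes H: "H10 u G" and nz: "(\<integral>\<^sup>+x. ennreal ((u x)\<^sup>2) \<partial>lborel) \<noteq> 0"
    and al: "\<alpha> \<ge> 1" and N: "DIM('a) \<ge> 3"
  shows "\<alpha>\<^sup>2 / 32 \<le> (\<integral>x. (norm (G x))\<^sup>2 \<partial>lborel) /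
            (\<integral>x\<in>ball 0 1. (1 - norm x) powr \<alpha> * (u x)\<^sup>2 \<partial>lborel)"
proof -
  from H obtain \<phi> where mu[measurable]: "u \<in> borel_measurable lborel"
    and mG[measurable]: "G \<in> borel_measurable lborel"
    and tf: "\<And>k. test_fun (\<phi> k)"
    and A: "(\<lambda>k. \<integral>\<^sup>+x. ennreal ((\<phi> k x - u x)\<^sup>2) \<partial>lborel) \<longlonglongrightarrow> 0"
    and B: "(\<lambda>k. \<integral>\<^sup>+x. ennreal ((norm (grad (\<phi> k) x - G x))\<^sup>2) \<partial>lborel) \<longlonglongrightarrow> 0"
    unfolding H10_def by blast
  have mphi[measurable]: "\<phi> k \<in> borel_measurable lborel" for k
    by (rule cont_meas[OF test_fun_cont[OF tf]])
  have mgr[measurable]: "grad (\<phi> k) \<in> borel_measurable lborel" for k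
    by (rule cont_meas[OF test_fun_grad_cont[OF tf]])
  define \<delta> where "\<delta> = 1/\<alpha>"
  have dl: "\<delta> > 0" using al by (simp add: \<delta>_def)
  define W where "W x = 1 / (4 * (x \<bullet> x + \<delta>^2))" for x :: 'a
  define Wm where "Wm = 1 / (4 * \<delta>^2)"
  have Wden: "0 < 4 * (x \<bullet> x + \<delta>^2)" for x :: 'a using dl by (simp add: add_nonneg_pos)
  have W0: "0 \<le> W x" for x using Wden[of x] by (simp add: W_def)
  have Wle: "W x \<le> Wm" for x
    unfolding W_def Wm_def using Wden[of x] dl by (intro divide_left_mono) auto
  have Wm0: "0 \<le> Wm" using dl by (simp add: Wm_def)
  have mW[measurable]: "W \<in> borel_measurable lborel"
  proof -
    have "continuous_on UNIV W"
      unfolding W_def[abs_def] using Wden by (intro continuous_intros) (auto simp: less_imp_neq[symmetric])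
    then show ?thesis by (rule cont_meas)
  qed
  let ?AG = "\<integral>\<^sup>+x. ennreal ((norm (G x))\<^sup>2) \<partial>lborel"
  let ?Au = "\<integral>\<^sup>+x. ennreal ((u x)\<^sup>2) \<partial>lborel"
  let ?A = "\<lambda>k. \<integral>\<^sup>+x. ennreal ((\<phi> k x - u x)\<^sup>2) \<partial>lborel"
  let ?B = "\<lambda>k. \<integral>\<^sup>+x. ennreal ((norm (grad (\<phi> k) x - G x))\<^sup>2) \<partial>lborel"
  have gradsplit: "(\<integral>\<^sup>+x. ennreal ((norm (grad (\<phi> k) x))\<^sup>2) \<partial>lborel) \<le> 2 * ?AG + ennreal 2 * ?B k" for k
  proof (rule nn_split)
    show "(norm (grad (\<phi> k) x))\<^sup>2 \<le> 2 * (norm (G x))\<^sup>2 + 2 * (norm (grad (\<phi> k) x - G x))\<^sup>2" for x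
      using norm_sq_split[of "grad (\<phi> k) x" "G x"] by simp
  qed auto
  have usplit: "?Au \<le> 2 * (\<integral>\<^sup>+x. ennreal ((\<phi> k x)\<^sup>2) \<partial>lborel) + ennreal 2 * ?A k" for k
  proof (rule nn_split)
    show "(u x)\<^sup>2 \<le> 2 * (\<phi> k x)\<^sup>2 + 2 * (\<phi> k x - u x)\<^sup>2" for x
      using sq_split[of "u x" "\<phi> k x"] by (simp add: power2_commute)
  qed auto
  have Gsplit: "?AG \<le> 2 * (\<integral>\<^sup>+x. ennreal ((norm (grad (\<phi> k) x))\<^sup>2) \<partial>lborel) + ennreal 2 * ?B k" for k
  proof (rule nn_split)
    show "(norm (G x))\<^sup>2 \<le> 2 * (norm (grad (\<phi> k) x))\<^sup>2 + 2 * (norm (grad (\<phi> k) x - G x))\<^sup>2" for x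
      using norm_sq_split[of "G x" "grad (\<phi> k) x"] by (simp add: norm_minus_commute)
  qed auto
  have phifin: "(\<integral>\<^sup>+x. ennreal ((\<phi> k x)\<^sup>2) \<partial>lborel) = ennreal (\<integral>x. (\<phi> k x)\<^sup>2 \<partial>lborel)" for k
    by (rule nn_integral_eq_integral[OF test_sq_int[OF tf]]) auto
  have gradfin: "(\<integral>\<^sup>+x. ennreal ((norm (grad (\<phi> k) x))\<^sup>2) \<partial>lborel) = ennreal (\<integral>x. (norm (grad (\<phi> k) x))\<^sup>2 \<partial>lborel)" for k
    by (rule nn_integral_eq_integral[OF hardy_test(2)[OF tf dl N]]) auto
  obtain k0 where k0: "?A k0 < 1" "?B k0 < 1"
  proof -
    have "eventually (\<lambda>k. ?A k < 1) sequentially" using order_tendstoD(2)[OF A] by simp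
    moreover have "eventually (\<lambda>k. ?B k < 1) sequentially" using order_tendstoD(2)[OF B] by simp
    ultimately have "eventually (\<lambda>k. ?A k < 1 \<and> ?B k < 1) sequentially" by (rule eventually_conj)
    then show ?thesis using that by (auto simp: eventually_sequentially)
  qed
  have k0nt: "?A k0 \<noteq> top" "?B k0 \<noteq> top" using k0 by (auto simp: top_unique)
  have Aufin: "?Au < \<infinity>"
  proof -
    have "?Au \<le> 2 * ennreal (\<integral>x. (\<phi> k0 x)\<^sup>2 \<partial>lborel) + ennreal 2 * ?A k0"
      using usplit[of k0] phifin[of k0] by simp
    also have "\<dots> < \<infinity>" using k0nt by (simp add: ennreal_mult_eq_top_iff less_top[symmetric])
    finally show ?thesis .
  qed
  have AGfin: "?AG < \<infinity>"
  proof -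
    have "?AG \<le> 2 * ennreal (\<integral>x. (norm (grad (\<phi> k0) x))\<^sup>2 \<partial>lborel) + ennreal 2 * ?B k0"
      using Gsplit[of k0] gradfin[of k0] by simp
    also have "\<dots> < \<infinity>" using k0nt by (simp add: ennreal_mult_eq_top_iff less_top[symmetric])
    finally show ?thesis .
  qed
  have [measurable]: "ball (0::'a) 1 \<in> sets lborel" by simp
  have outside: "AE x in lborel. x \<notin> ball 0 1 \<longrightarrow> u x = 0"
  proof -
    let ?O = "\<integral>\<^sup>+x. ennreal (indicator (- ball 0 1) x * (u x)\<^sup>2) \<partial>lborel"
    have le: "?O \<le> ?A k" for k
    proof (rule nn_integral_mono)
      fix x :: 'a
      show "ennreal (indicator (- ball 0 1) x * (u x)\<^sup>2) \<le> ennreal ((\<phi> k x - u x)\<^sup>2)"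
      proof (cases "x \<in> ball 0 1")
        case True then show ?thesis by simp
      next
        case False
        then have "\<phi> k x = 0" using test_fun_zero(1)[OF tf[of k], of x] by (simp add: mem_ball_0 not_less)
        then show ?thesis using False by simp
      qed
    qed
    have "?O \<le> 0"
      by (rule tendsto_le[OF trivial_limit_sequentially A tendsto_const]) (use le in auto)
    then have "?O = 0" by simp
    then have "AE x in lborel. ennreal (indicator (- ball 0 1) x * (u x)\<^sup>2) = 0"
      by (subst (asm) nn_integral_0_iff_AE) auto
    then show ?thesis by (rule eventually_mono) (auto simp: indicator_def split: if_splits)
  qed
  let ?X = "\<integral>\<^sup>+x. ennreal (W x * (u x)\<^sup>2) \<partial>lborel"
  have Xk: "?X \<le> 2 * (2 * ?AG + ennreal 2 * ?B k) + ennreal (2 * Wm) * ?A k" for k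
  proof -
    have "?X \<le> 2 * (\<integral>\<^sup>+x. ennreal (W x * (\<phi> k x)\<^sup>2) \<partial>lborel) + ennreal (2 * Wm) * ?A k"
    proof (rule nn_split)
      show "W x * (u x)\<^sup>2 \<le> 2 * (W x * (\<phi> k x)\<^sup>2) + 2 * Wm * (\<phi> k x - u x)\<^sup>2" for x
      proof -
        have "W x * (u x)\<^sup>2 \<le> W x * (2 * (\<phi> k x)\<^sup>2 + 2 * (\<phi> k x - u x)\<^sup>2)"
          using sq_split[of "u x" "\<phi> k x"] W0[of x] by (intro mult_left_mono) (auto simp: power2_commute)
        also have "\<dots> = 2 * (W x * (\<phi> k x)\<^sup>2) + 2 * (W x * (\<phi> k x - u x)\<^sup>2)" by (simp add: algebra_simps)
        also have "\<dots> \<le> 2 * (W x * (\<phi> k x)\<^sup>2) + 2 * (Wm * (\<phi> k x - u x)\<^sup>2)"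
          using Wle[of x] by (intro add_left_mono mult_left_mono mult_right_mono) auto
        finally show ?thesis by simp
      qed
    qed (auto simp: W0 Wm0)
    also have "(\<integral>\<^sup>+x. ennreal (W x * (\<phi> k x)\<^sup>2) \<partial>lborel) \<le> 2 * ?AG + ennreal 2 * ?B k"
    proof -
      have fe: "(\<lambda>x. W x * (\<phi> k x)\<^sup>2) = (\<lambda>x. (\<phi> k x)^2 / (4 * (x \<bullet> x + \<delta>^2)))"
        by (auto simp: W_def)
      have "(\<integral>\<^sup>+x. ennreal (W x * (\<phi> k x)\<^sup>2) \<partial>lborel) = ennreal (\<integral>x. W x * (\<phi> k x)\<^sup>2 \<partial>lborel)"
        by (rule nn_integral_eq_integral) (use hardy_test(1)[OF tf dl N] fe W0 in auto)
      also have "\<dots> \<le> ennreal (\<integral>x. (norm (grad (\<phi> k) x))\<^sup>2 \<partial>lborel)"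
        using hardy_test(3)[OF tf dl N] fe by (intro ennreal_leI) simp
      also have "\<dots> = (\<integral>\<^sup>+x. ennreal ((norm (grad (\<phi> k) x))\<^sup>2) \<partial>lborel)" by (rule gradfin[symmetric])
      also have "\<dots> \<le> 2 * ?AG + ennreal 2 * ?B k" by (rule gradsplit)
      finally show ?thesis .
    qed
    then have "2 * (\<integral>\<^sup>+x. ennreal (W x * (\<phi> k x)\<^sup>2) \<partial>lborel) + ennreal (2 * Wm) * ?A k
        \<le> 2 * (2 * ?AG + ennreal 2 * ?B k) + ennreal (2 * Wm) * ?A k"
      by (intro add_right_mono mult_left_mono) auto
    finally show ?thesis .
  qed
  have lim: "(\<lambda>k. 2 * (2 * ?AG + ennreal 2 * ?B k) + ennreal (2 * Wm) * ?A k) \<longlonglongrightarrow>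
      2 * (2 * ?AG + ennreal 2 * 0) + ennreal (2 * Wm) * 0"
    by (intro tendsto_add ennreal_tendsto_cmult tendsto_const A B) auto
  have "?X \<le> 2 * (2 * ?AG + ennreal 2 * 0) + ennreal (2 * Wm) * 0"
    by (rule tendsto_le[OF trivial_limit_sequentially lim tendsto_const]) (use Xk in auto)
  then have Xle: "?X \<le> 4 * ?AG" by (simp add: mult.assoc[symmetric])
  have IG: "integrable lborel (\<lambda>x. (norm (G x))\<^sup>2)" "?AG = ennreal (\<integral>x. (norm (G x))\<^sup>2 \<partial>lborel)"
    using enn_finite_int[of "\<lambda>x. (norm (G x))\<^sup>2" lborel] AGfin by auto
  have Iu: "integrable lborel (\<lambda>x. (u x)\<^sup>2)"
    using enn_finite_int[of "\<lambda>x. (u x)\<^sup>2" lborel] Aufin by auto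
  define w where "w x = (1 - norm x) powr \<alpha>" for x :: 'a
  define h where "h x = indicator (ball 0 1) x *\<^sub>R (w x * (u x)\<^sup>2)" for x :: 'a
  have mh[measurable]: "h \<in> borel_measurable lborel" unfolding h_def w_def by measurable
  have h0: "0 \<le> h x" for x by (simp add: h_def w_def)
  have hle: "h x \<le> (u x)\<^sup>2" for x
  proof (cases "x \<in> ball 0 1")
    case True
    then have "w x \<le> 1" unfolding w_def using al by (intro powr_le1) (auto simp: mem_ball_0)
    then have "w x * (u x)\<^sup>2 \<le> 1 * (u x)\<^sup>2" by (intro mult_right_mono) auto
    then show ?thesis using True by (simp add: h_def)
  qed (simp add: h_def)
  have Ih: "integrable lborel h"
    by (rule Bochner_Integration.integrable_bound[OF Iu mh]) (use h0 hle in auto)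
  define D where "D = (\<integral>x. h x \<partial>lborel)"
  have Deq: "(\<integral>x\<in>ball 0 1. (1 - norm x) powr \<alpha> * (u x)\<^sup>2 \<partial>lborel) = D"
    by (simp add: set_lebesgue_integral_def D_def h_def w_def)
  have D0: "0 \<le> D" unfolding D_def using h0 by (intro integral_nonneg_AE) auto
  have Dpos: "D > 0"
  proof (rule ccontr)
    assume "\<not> D > 0"
    then have "D = 0" using D0 by simp
    then have "AE x in lborel. h x = 0"
      using integral_nonneg_eq_0_iff_AE[OF Ih] h0 unfolding D_def by auto
    then have "AE x in lborel. u x = 0"
      using outside
    proof eventually_elim
      case (elim x)
      show ?case
      proof (cases "x \<in> ball 0 1")
        case True
        then have "w x > 0" unfolding w_def by (simp add: powr_gt_zero mem_ball_0)
        moreover have "w x * (u x)\<^sup>2 = 0" using elim True by (simp add: h_def)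
        ultimately show ?thesis by simp
      qed (use elim in auto)
    qed
    then have "AE x in lborel. ennreal ((u x)\<^sup>2) = 0" by (rule eventually_mono) simp
    then have "?Au = 0" by (subst nn_integral_0_iff_AE) auto
    with nz show False by simp
  qed
  have low: "ennreal (\<alpha>\<^sup>2 / 8 * D) \<le> ?X"
  proof -
    have "ennreal (\<alpha>\<^sup>2 / 8 * D) = ennreal (\<integral>x. \<alpha>\<^sup>2 / 8 * h x \<partial>lborel)" by (simp add: D_def)
    also have "\<dots> = (\<integral>\<^sup>+x. ennreal (\<alpha>\<^sup>2 / 8 * h x) \<partial>lborel)"
      by (rule nn_integral_eq_integral[symmetric]) (use Ih h0 in auto)
    also have "\<dots> \<le> ?X"
    proof (rule nn_integral_mono, rule ennreal_leI)
      fix x :: 'a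
      show "\<alpha>\<^sup>2 / 8 * h x \<le> W x * (u x)\<^sup>2"
      proof (cases "x \<in> ball 0 1")
        case True
        have wb: "w x \<le> 8 / \<alpha>^2 * W x"
          using weight_bound[OF al, of "norm x"] True
          by (simp add: w_def W_def \<delta>_def mem_ball_0 power2_norm_eq_inner)
        have "\<alpha>\<^sup>2 / 8 * w x \<le> \<alpha>\<^sup>2 / 8 * (8 / \<alpha>^2 * W x)" using wb by (intro mult_left_mono) auto
        also have "\<dots> = W x" using al by simp
        finally have "\<alpha>\<^sup>2 / 8 * w x * (u x)\<^sup>2 \<le> W x * (u x)\<^sup>2" by (intro mult_right_mono) auto
        then show ?thesis using True by (simp add: h_def mult.assoc)
      qed (simp add: h_def W0)
    qed
    finally show ?thesis .
  qed
  have "ennreal (\<alpha>\<^sup>2 / 8 * D) \<le> ennreal (4 * (\<integral>x. (norm (G x))\<^sup>2 \<partial>lborel))"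
    using low Xle IG(2) by (simp add: ennreal_mult)
  then have "\<alpha>\<^sup>2 / 8 * D \<le> 4 * (\<integral>x. (norm (G x))\<^sup>2 \<partial>lborel)"
    by (subst (asm) ennreal_le_iff) (auto intro!: integral_nonneg_AE)
  then have "\<alpha>\<^sup>2 / 32 * D \<le> (\<integral>x. (norm (G x))\<^sup>2 \<partial>lborel)" by simp
  then show ?thesis unfolding Deq using Dpos by (simp add: pos_le_divide_eq)
qed



lemma phi0_H10: "H10 (phi0 :: 'a::euclidean_space \<Rightarrow> real) (grad phi0)"
  unfolding H10_def
proof (intro conjI exI[of _ "\<lambda>k. phi0"])
  show "(phi0 :: 'a \<Rightarrow> real) \<in> borel_measurable lborel" by (rule cont_meas[OF test_fun_cont[OF phi0_test]])
  show "grad (phi0 :: 'a \<Rightarrow> real) \<in> borel_measurable lborel" by (rule cont_meas[OF test_fun_grad_cont[OF phi0_test]])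
qed (auto simp: phi0_test)

lemma Lambda_bound:
  assumes N: "DIM('a::euclidean_space) \<ge> 3" and al: "\<alpha> \<ge> 1"
  shows "\<alpha>\<^sup>2 / 32 \<le> Lambda TYPE('a) \<alpha>"
  unfolding Lambda_def
proof (rule cInf_greatest)
  let ?r = "\<lambda>(u::'a \<Rightarrow> real) G. (\<integral>x. (norm (G x))\<^sup>2 \<partial>lborel) /
        (\<integral>x\<in>ball 0 1. (1 - norm x) powr \<alpha> * (u x)\<^sup>2 \<partial>lborel)"
  have h: "H10 (phi0::'a \<Rightarrow> real) (grad phi0)" "radial (phi0::'a \<Rightarrow> real)"
    "(\<integral>\<^sup>+ x. ennreal ((phi0 x)\<^sup>2) \<partial>(lborel::'a measure)) \<noteq> 0"
    by (rule phi0_H10, rule phi0_radial, rule phi0_nonzero)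
  show "{(\<integral>x. (norm (G x))\<^sup>2 \<partial>lborel) /
        (\<integral>x\<in>ball 0 1. (1 - norm x) powr \<alpha> * (u x)\<^sup>2 \<partial>lborel) | (u :: 'a \<Rightarrow> real) G.
        H10 u G \<and> radial u \<and> (\<integral>\<^sup>+ x. ennreal ((u x)\<^sup>2) \<partial>lborel) \<noteq> 0} \<noteq> {}"
    using h by blast
next
  fix y assume "y \<in> {(\<integral>x. (norm (G x))\<^sup>2 \<partial>lborel) /
        (\<integral>x\<in>ball 0 1. (1 - norm x) powr \<alpha> * (u x)\<^sup>2 \<partial>lborel) | (u :: 'a \<Rightarrow> real) G.
        H10 u G \<and> radial u \<and> (\<integral>\<^sup>+ x. ennreal ((u x)\<^sup>2) \<partial>lborel) \<noteq> 0}"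
  then obtain u :: "'a \<Rightarrow> real" and G :: "'a \<Rightarrow> 'a" where y: "y = (\<integral>x. (norm (G x))\<^sup>2 \<partial>lborel) /
        (\<integral>x\<in>ball 0 1. (1 - norm x) powr \<alpha> * (u x)\<^sup>2 \<partial>lborel)" and H: "H10 u G" and nz: "(\<integral>\<^sup>+ x. ennreal ((u x)\<^sup>2) \<partial>lborel) \<noteq> 0"
    by auto
  show "\<alpha>\<^sup>2 / 32 \<le> y" unfolding y using main_ineq[OF H nz al N] by simp
qed

theorem mainTheorem13:
  assumes "DIM('a::euclidean_space) \<ge> 3"
  shows "\<exists>C>0. Liminf at_top (\<lambda>\<alpha>. ereal (Lambda TYPE('a) \<alpha> / \<alpha>\<^sup>2)) \<ge> ereal C"
proof (intro exI conjI)
  show "(0::real) < 1/32" by simp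
  show "ereal (1/32) \<le> Liminf at_top (\<lambda>\<alpha>. ereal (Lambda TYPE('a) \<alpha> / \<alpha>\<^sup>2))"
  proof (rule Liminf_bounded)
    show "\<forall>\<^sub>F \<alpha> in at_top. ereal (1/32) \<le> ereal (Lambda TYPE('a) \<alpha> / \<alpha>\<^sup>2)"
      using eventually_ge_at_top[of "1::real"]
    proof eventually_elim
      case (elim \<alpha>)
      have "\<alpha>\<^sup>2 / 32 \<le> Lambda TYPE('a) \<alpha>" by (rule Lambda_bound[OF assms elim])
      moreover have "\<alpha>\<^sup>2 > 0" using elim by simp
      ultimately have "1/32 \<le> Lambda TYPE('a) \<alpha> / \<alpha>\<^sup>2" by (simp add: le_divide_eq)
      then show ?case by simp
    qed
  qed
qed


end
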